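(* There exist absolute constants $C>0$, $c>0$ and $m_0$ such that for all positive integers $n,m$ with $m\le \frac{\sqrt{n}}{2}$, \[\operatorname{scp}(K_n-K_m)\ \ge\ (2m-1)n-Cm^2,\] and if moreover $m\ge m_0$, \[\operatorname{scp}(K_n-K_m)\ \le\ (2m-1)n-cm^2.\] (That is, $(2m-1)n-O(m^2)\le \operatorname{scp}(K_n-K_m)\le (2m-1)n-\Omega(m^2)$ for $m\le\sqrt n/2$.)
   Context: $K_n-K_m$ denotes the graph obtained from $K_n$ by deleting all edges among a fixed set of $m$ of its vertices. A clique partition of a graph $G$ is a family of cliques of $G$ such that every edge has both endpoints in exactly one member; $\operatorname{scp}(G)$ is the minimum of the sum of the sizes of the cliques over all clique partitions of $G$. *)

theory Defs
  imports Complex_Main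
begin

text \<open>The graph K_n - K_m: vertex set {0..<n}; the fixed m-set is {0..<m};
  two distinct vertices are adjacent unless both lie in {0..<m}.\<close>

definition KnKm_adj :: "nat \<Rightarrow> nat \<Rightarrow> nat \<Rightarrow> nat \<Rightarrow> bool" where
  "KnKm_adj n m u v \<longleftrightarrow> u < n \<and> v < n \<and> u \<noteq> v \<and> \<not> (u < m \<and> v < m)"

definition is_clique :: "nat \<Rightarrow> nat \<Rightarrow> nat set \<Rightarrow> bool" where
  "is_clique n m Q \<longleftrightarrow> Q \<subseteq> {0..<n} \<and> (\<forall>u\<in>Q. \<forall>v\<in>Q. u \<noteq> v \<longrightarrow> KnKm_adj n m u v)"

definition is_clique_partition :: "nat \<Rightarrow> nat \<Rightarrow> nat set set \<Rightarrow> bool" where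
  "is_clique_partition n m P \<longleftrightarrow> finite P \<and> (\<forall>Q\<in>P. is_clique n m Q) \<and>
     (\<forall>u v. KnKm_adj n m u v \<longrightarrow> (\<exists>!Q. Q \<in> P \<and> u \<in> Q \<and> v \<in> Q))"

definition scp_KnKm :: "nat \<Rightarrow> nat \<Rightarrow> nat" where
  "scp_KnKm n m = Min {\<Sum>Q\<in>P. card Q | P. is_clique_partition n m P}"

end

theory Submission
  imports Defs
begin

lemma cp_fin: "is_clique_partition n m P \<Longrightarrow> finite P"
  by (simp add: is_clique_partition_def)

lemma cp_sub: "is_clique_partition n m P \<Longrightarrow> Q \<in> P \<Longrightarrow> Q \<subseteq> {0..<n}"
  by (simp add: is_clique_partition_def is_clique_def)

lemma cp_clq: "is_clique_partition n m P \<Longrightarrow> Q \<in> P \<Longrightarrow> u \<in> Q \<Longrightarrow> v \<in> Q \<Longrightarrow> u \<noteq> v \<Longrightarrow> KnKm_adj n m u v"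
  by (simp add: is_clique_partition_def is_clique_def)

lemma cp_uniq: "is_clique_partition n m P \<Longrightarrow> KnKm_adj n m u v \<Longrightarrow> \<exists>!Q. Q \<in> P \<and> u \<in> Q \<and> v \<in> Q"
  by (simp add: is_clique_partition_def)

lemma sum_eq:
  assumes "is_clique_partition n m P"
  shows "(\<Sum>Q\<in>P. card Q) = (\<Sum>v<n. card {Q\<in>P. v\<in>Q})"
proof -
  have fP: "finite P" using cp_fin[OF assms] .
  have "(\<Sum>Q\<in>P. card Q) = (\<Sum>Q\<in>P. \<Sum>v<n. if v \<in> Q then 1 else 0)"
  proof (rule sum.cong[OF refl])
    fix Q assume "Q \<in> P"
    hence "Q \<subseteq> {0..<n}" using cp_sub[OF assms] by auto
    hence "{v\<in>{..<n}. v \<in> Q} = Q" by auto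
    hence "card Q = card {v\<in>{..<n}. v \<in> Q}" by simp
    also have "\<dots> = (\<Sum>v<n. if v \<in> Q then 1 else 0)"
      using sum.inter_filter[of "{..<n}" "\<lambda>_. (1::nat)" "\<lambda>v. v \<in> Q"] by simp
    finally show "card Q = (\<Sum>v<n. if v \<in> Q then 1 else 0)" .
  qed
  also have "\<dots> = (\<Sum>v<n. \<Sum>Q\<in>P. if v \<in> Q then 1 else 0)"
    by (rule sum.swap)
  also have "\<dots> = (\<Sum>v<n. card {Q\<in>P. v\<in>Q})"
  proof (rule sum.cong[OF refl])
    fix v show "(\<Sum>Q\<in>P. if v \<in> Q then 1 else 0) = card {Q\<in>P. v\<in>Q}"
      using sum.inter_filter[OF fP, of "\<lambda>_. (1::nat)" "\<lambda>Q. v \<in> Q"] by simp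
  qed
  finally show ?thesis .
qed

lemma F1:
  assumes cp: "is_clique_partition n m P" and v: "m \<le> v" "v < n"
  shows "m \<le> card {Q\<in>P. v\<in>Q}"
proof -
  define f where "f a = (THE Q. Q \<in> P \<and> a \<in> Q \<and> v \<in> Q)" for a
  have adj: "KnKm_adj n m a v" if "a < m" for a
    using that v by (auto simp: KnKm_adj_def)
  have fa: "f a \<in> P \<and> a \<in> f a \<and> v \<in> f a" if "a < m" for a
    unfolding f_def using theI'[OF cp_uniq[OF cp adj[OF that]]] .
  have "inj_on f {..<m}"
  proof
    fix a b assume a: "a \<in> {..<m}" and b: "b \<in> {..<m}" and e: "f a = f b"
    show "a = b"
    proof (rule ccontr)
      assume "a \<noteq> b"
      hence "KnKm_adj n m a b" using cp_clq[OF cp, of "f a" a b] fa a b e by auto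
      thus False using a b by (auto simp: KnKm_adj_def)
    qed
  qed
  moreover have "f ` {..<m} \<subseteq> {Q\<in>P. v\<in>Q}" using fa by auto
  moreover have "finite {Q\<in>P. v\<in>Q}" using cp_fin[OF cp] by auto
  ultimately have "card {..<m} \<le> card {Q\<in>P. v\<in>Q}" by (rule card_inj_on_le)
  thus ?thesis by simp
qed

lemma F2:
  assumes cp: "is_clique_partition n m P" and Z: "Z \<in> P" "v \<notin> Z"
  shows "card {z\<in>Z. KnKm_adj n m v z} \<le> card {Q\<in>P. v\<in>Q}"
proof -
  define f where "f z = (THE Q. Q \<in> P \<and> v \<in> Q \<and> z \<in> Q)" for z
  have fa: "f z \<in> P \<and> v \<in> f z \<and> z \<in> f z" if "KnKm_adj n m v z" for z
    unfolding f_def using theI'[OF cp_uniq[OF cp that]] .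
  have "inj_on f {z\<in>Z. KnKm_adj n m v z}"
  proof
    fix a b assume a: "a \<in> {z\<in>Z. KnKm_adj n m v z}" and b: "b \<in> {z\<in>Z. KnKm_adj n m v z}"
      and e: "f a = f b"
    show "a = b"
    proof (rule ccontr)
      assume "a \<noteq> b"
      have aZ: "a \<in> Z" "KnKm_adj n m v a" using a by auto
      have bZ: "b \<in> Z" "KnKm_adj n m v b" using b by auto
      have ab: "KnKm_adj n m a b" using cp_clq[OF cp Z(1) aZ(1) bZ(1) \<open>a \<noteq> b\<close>] .
      have fa1: "f a \<in> P" "v \<in> f a" "a \<in> f a" using fa[OF aZ(2)] by auto
      have fb1: "b \<in> f a" using fa[OF bZ(2)] e by simp
      have "f a \<in> P \<and> a \<in> f a \<and> b \<in> f a" using fa1 fb1 by simp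
      moreover have "Z \<in> P \<and> a \<in> Z \<and> b \<in> Z" using aZ bZ Z by simp
      moreover have "f a \<noteq> Z" using fa1 Z by auto
      ultimately show False using cp_uniq[OF cp ab] by blast
    qed
  qed
  moreover have "f ` {z\<in>Z. KnKm_adj n m v z} \<subseteq> {Q\<in>P. v\<in>Q}" using fa by auto
  moreover have "finite {Q\<in>P. v\<in>Q}" using cp_fin[OF cp] by auto
  ultimately show ?thesis by (rule card_inj_on_le)
qed

lemma F3:
  assumes cp: "is_clique_partition n m P" and v: "m \<le> v" "v < n"
    and L: "\<forall>Q\<in>P. card Q \<le> L"
  shows "n - 1 \<le> card {Q\<in>P. v\<in>Q} * (L - 1)"
proof -
  have "{0..<n} - {v} \<subseteq> (\<Union>Q\<in>{Q\<in>P. v\<in>Q}. Q - {v})"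
  proof
    fix u assume u: "u \<in> {0..<n} - {v}"
    hence "KnKm_adj n m v u" using v by (auto simp: KnKm_adj_def)
    then obtain Q where "Q \<in> P" "v \<in> Q" "u \<in> Q" using cp_uniq[OF cp] by blast
    thus "u \<in> (\<Union>Q\<in>{Q\<in>P. v\<in>Q}. Q - {v})" using u by auto
  qed
  hence "card ({0..<n} - {v}) \<le> card (\<Union>Q\<in>{Q\<in>P. v\<in>Q}. Q - {v})"
    by (intro card_mono) (use cp_fin[OF cp] cp_sub[OF cp] in \<open>auto intro: finite_subset\<close>)
  also have "\<dots> \<le> (\<Sum>Q\<in>{Q\<in>P. v\<in>Q}. card (Q - {v}))"
    by (rule card_UN_le) (use cp_fin[OF cp] in auto)
  also have "\<dots> \<le> (\<Sum>Q\<in>{Q\<in>P. v\<in>Q}. L - 1)"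
  proof (rule sum_mono)
    fix Q assume "Q \<in> {Q\<in>P. v\<in>Q}"
    moreover hence "finite Q" using cp_sub[OF cp] finite_subset by blast
    ultimately show "card (Q - {v}) \<le> L - 1" using L by (auto simp: card_Diff_singleton)
  qed
  finally show ?thesis using v by (simp add: mult.commute)
qed

lemma cardA:
  assumes cp: "is_clique_partition n m P" and Z: "Z \<in> P"
  shows "card Z \<le> card (Z - {..<m}) + 1"
proof -
  have fZ: "finite Z" using cp_sub[OF cp Z] finite_subset by blast
  have "card (Z \<inter> {..<m}) \<le> Suc 0"
  proof (subst card_le_Suc0_iff_eq)
    show "finite (Z \<inter> {..<m})" using fZ by auto
    show "\<forall>a\<in>Z \<inter> {..<m}. \<forall>b\<in>Z \<inter> {..<m}. a = b"
      using cp_clq[OF cp Z] by (auto simp: KnKm_adj_def)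
  qed
  moreover have "card Z = card (Z - {..<m}) + card (Z \<inter> {..<m})"
    using card_Int_Diff[OF fZ, of "{..<m}"] by simp
  ultimately show ?thesis by simp
qed



lemma lower:
  assumes cp: "is_clique_partition n m P" and m: "0 < m" and nm: "4 * m^2 \<le> n"
  shows "(2 * real m - 1) * real n - 2 * (real m)^2 \<le> real (\<Sum>Q\<in>P. card Q)"
proof -
  define d where "d v = card {Q\<in>P. v\<in>Q}" for v
  have fP: "finite P" using cp_fin[OF cp] .
  have mn: "m < n" 
  proof -
    have "m \<le> m * m" by (rule le_square)
    moreover have "0 < m * m" using m by simp
    moreover have "4 * (m * m) \<le> n" using nm by (simp add: power2_eq_square)
    ultimately show ?thesis by linarith
  qed
  have e0: "KnKm_adj n m 0 m" using mn m by (auto simp: KnKm_adj_def)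
  then obtain Q0 where Q0: "Q0 \<in> P" "0 \<in> Q0" "m \<in> Q0" using cp_uniq[OF cp] by blast
  have fQ: "finite Q" if "Q \<in> P" for Q using cp_sub[OF cp that] finite_subset by blast
  have "P \<noteq> {}" using Q0 by auto
  define L where "L = Max (card ` P)"
  have Lin: "L \<in> card ` P" unfolding L_def using fP \<open>P \<noteq> {}\<close> by auto
  then obtain Z where Z: "Z \<in> P" "card Z = L" by auto
  have Lmax: "\<forall>Q\<in>P. card Q \<le> L" unfolding L_def using fP by auto
  have "card {0, m} \<le> card Q0" using Q0 fQ[OF Q0(1)] by (intro card_mono) auto
  hence "2 \<le> card Q0" using m by simp
  hence L2: "2 \<le> L" using Lmax Q0 by force
  have S: "(\<Sum>Q\<in>P. card Q) = (\<Sum>v<n. d v)" using sum_eq[OF cp] unfolding d_def .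
  have ZA: "card Z \<le> card (Z - {..<m}) + 1" using cardA[OF cp Z(1)] .
  have Zsub: "Z \<subseteq> {..<n}" using cp_sub[OF cp Z(1)] by auto
  have fZ: "finite Z" using fQ[OF Z(1)] .
  show ?thesis
  proof (cases "2 * m \<le> L")
    case True
    have out: "L - 1 \<le> d v" if v: "v \<in> {..<n} - Z" for v
    proof -
      have "Z - {..<m} \<subseteq> {z\<in>Z. KnKm_adj n m v z}" using v Zsub by (auto simp: KnKm_adj_def)
      hence "card (Z - {..<m}) \<le> card {z\<in>Z. KnKm_adj n m v z}" using fZ by (intro card_mono) auto
      also have "\<dots> \<le> d v" unfolding d_def using F2[OF cp Z(1)] v by auto
      finally show ?thesis using ZA Z(2) by linarith
    qed
    have inn: "m \<le> d v" if v: "v \<in> Z - {..<m}" for v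
      unfolding d_def using F1[OF cp] v Zsub by auto
    have "(\<Sum>v<n. d v) = (\<Sum>v\<in>{..<n} - Z. d v) + (\<Sum>v\<in>Z. d v)"
      using Zsub by (metis finite_lessThan sum.subset_diff)
    moreover have "(\<Sum>v\<in>{..<n} - Z. d v) \<ge> (\<Sum>v\<in>{..<n} - Z. L - 1)"
      using out by (intro sum_mono) auto
    moreover have "(\<Sum>v\<in>Z. d v) \<ge> (\<Sum>v\<in>Z - {..<m}. d v)"
      using fZ by (intro sum_mono2) auto
    moreover have "(\<Sum>v\<in>Z - {..<m}. d v) \<ge> (\<Sum>v\<in>Z - {..<m}. m)"
      using inn by (intro sum_mono) auto
    moreover have "card ({..<n} - Z) = n - L" using Zsub Z(2) fZ by (simp add: card_Diff_subset)
    ultimately have T: "(\<Sum>v<n. d v) \<ge> (n - L) * (L - 1) + card (Z - {..<m}) * m" by simp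
    have "Z - {..<m} \<subseteq> {m..<n}" using Zsub by auto
    hence "card (Z - {..<m}) \<le> n - m" by (metis card_atLeastLessThan card_mono finite_atLeastLessThan)
    hence Lub: "L \<le> n - m + 1" using ZA Z(2) by linarith
    have Ln: "L \<le> n" using Zsub Z(2) by (metis card_lessThan card_mono finite_lessThan)
    have T2: "real (\<Sum>v<n. d v) \<ge> (real n - real L) * (real L - 1) + (real L - 1) * real m"
    proof -
      have "real ((n - L) * (L - 1) + card (Z - {..<m}) * m) \<ge> (real n - real L) * (real L - 1) + (real L - 1) * real m"
      proof -
        have "card (Z - {..<m}) \<ge> L - 1" using ZA Z(2) by linarith
        hence "real (card (Z - {..<m})) \<ge> real L - 1" using L2 by linarith
        hence "real (card (Z - {..<m})) * real m \<ge> (real L - 1) * real m" by (simp add: mult_right_mono)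
        moreover have "real ((n - L) * (L - 1)) = (real n - real L) * (real L - 1)" using Ln L2 by (simp add: of_nat_diff)
        ultimately show ?thesis by simp
      qed
      thus ?thesis using T by linarith
    qed
    have p: "(real L - 2 * real m) * (real n - real m + 1 - real L) \<ge> 0"
      using True Lub mn by (intro mult_nonneg_nonneg) (simp_all add: of_nat_diff)
    have "(2 * real m - 1) * real n - 2 * (real m)^2 \<le> (2 * real m - 1) * (real n - real m)"
      using m by (simp add: algebra_simps power2_eq_square)
    also have "\<dots> \<le> (real n - real L) * (real L - 1) + (real L - 1) * real m"
      using p by (simp add: algebra_simps)
    finally show ?thesis using S T2 by simp
  next
    case False
    hence m2: "2 \<le> m" using L2 by linarith
    have Lle: "L - 1 \<le> 2 * m - 2" using False by linarith
    have B: "n - 1 \<le> d v * (2 * m - 2)" if "v \<in> {m..<n}" for v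
    proof -
      have "n - 1 \<le> d v * (L - 1)" using F3[OF cp _ _ Lmax] that unfolding d_def by auto
      also have "\<dots> \<le> d v * (2 * m - 2)" using Lle by (simp add: mult_left_mono)
      finally show ?thesis .
    qed
    have sm: "(\<Sum>v<n. d v) \<ge> (\<Sum>v\<in>{m..<n}. d v)"
      by (intro sum_mono2) auto
    have "(\<Sum>v<n. d v) * (2 * m - 2) \<ge> (\<Sum>v\<in>{m..<n}. d v * (2 * m - 2))"
      using mult_right_mono[OF sm, of "2*m-2"] by (simp add: sum_distrib_right)
    moreover have "(\<Sum>v\<in>{m..<n}. d v * (2 * m - 2)) \<ge> (\<Sum>v\<in>{m..<n}. n - 1)"
      using B by (intro sum_mono) auto
    ultimately have K: "(\<Sum>v<n. d v) * (2 * m - 2) \<ge> (n - m) * (n - 1)" by simp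
    define s where "s = real (\<Sum>v<n. d v)"
    have K': "s * (2 * real m - 2) \<ge> (real n - real m) * (real n - 1)"
    proof -
      have "real ((\<Sum>v<n. d v) * (2 * m - 2)) \<ge> real ((n - m) * (n - 1))" using K by linarith
      thus ?thesis unfolding s_def using m2 mn by (simp add: of_nat_diff)
    qed
    have nm': "4 * (real m)^2 \<le> real n" using nm by (metis of_nat_le_iff of_nat_mult of_nat_numeral of_nat_power)
    have "(real n - real m) * (real n - 1) \<ge> (2 * real m - 2) * ((2 * real m - 1) * real n)"
    proof -
      have "real n * (real n - (4 * (real m)^2 - 5 * real m + 3)) \<ge> 0"
        using nm' m2 by (intro mult_nonneg_nonneg) auto
      moreover have "real m \<ge> 0" by simp
      ultimately show ?thesis by (simp add: algebra_simps power2_eq_square)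
    qed
    hence "s * (2 * real m - 2) \<ge> ((2 * real m - 1) * real n) * (2 * real m - 2)"
      using K' by (simp add: algebra_simps)
    hence "s \<ge> (2 * real m - 1) * real n" using m2 by (simp add: mult_le_cancel_right)
    moreover have "real (\<Sum>Q\<in>P. card Q) = s" unfolding s_def using S by simp
    moreover have "(0::real) \<le> 2 * (real m)^2" by simp
    ultimately show ?thesis by linarith
  qed
qed


definition P0 :: "nat \<Rightarrow> nat \<Rightarrow> nat set set" where
  "P0 n m = insert (insert 0 {m..<n}) ((\<lambda>(a,b). {a,b}) ` ({1..<m} \<times> {m..<n}))"

lemma P0_cp:
  assumes m: "0 < m" "m < n"
  shows "is_clique_partition n m (P0 n m)"
proof -
  have cl: "is_clique n m Q" if "Q \<in> P0 n m" for Q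
    using that m unfolding P0_def is_clique_def KnKm_adj_def by auto
  have un: "\<exists>!Q. Q \<in> P0 n m \<and> u \<in> Q \<and> v \<in> Q" if adj: "KnKm_adj n m u v" for u v
  proof -
    define W where "W = (if u \<in> {1..<m} \<or> v \<in> {1..<m} then {u,v} else insert 0 {m..<n})"
    have uv: "u < n" "v < n" "u \<noteq> v" "\<not> (u < m \<and> v < m)" using adj by (auto simp: KnKm_adj_def)
    have W1: "W \<in> P0 n m \<and> u \<in> W \<and> v \<in> W"
    proof (cases "u \<in> {1..<m} \<or> v \<in> {1..<m}")
      case True
      hence "W = {u,v}" unfolding W_def by simp
      moreover have "{u,v} \<in> (\<lambda>(a,b). {a,b}) ` ({1..<m} \<times> {m..<n})"
      proof (cases "u \<in> {1..<m}")
        case True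
        hence "(u,v) \<in> {1..<m} \<times> {m..<n}" using uv by auto
        thus ?thesis by force
      next
        case False
        hence "(v,u) \<in> {1..<m} \<times> {m..<n}" using uv \<open>u \<in> {1..<m} \<or> v \<in> {1..<m}\<close> by auto
        hence "{v,u} \<in> (\<lambda>(a,b). {a,b}) ` ({1..<m} \<times> {m..<n})" by force
        thus ?thesis by (simp add: insert_commute)
      qed
      ultimately show ?thesis unfolding P0_def by auto
    next
      case False
      have "W = insert 0 {m..<n}" unfolding W_def by (rule if_not_P[OF False])
      thus ?thesis using False uv unfolding P0_def by auto
    qed
    have W2: "Q = W" if Q: "Q \<in> P0 n m" "u \<in> Q" "v \<in> Q" for Q
    proof (cases "Q = insert 0 {m..<n}")
      case True
      hence nc: "\<not> (u \<in> {1..<m} \<or> v \<in> {1..<m})" using Q by auto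
      have "W = insert 0 {m..<n}" unfolding W_def by (rule if_not_P[OF nc])
      thus ?thesis using True by simp
    next
      case False
      hence "Q \<in> (\<lambda>(a,b). {a,b}) ` ({1..<m} \<times> {m..<n})" using Q(1) unfolding P0_def by simp
      then obtain p where p: "p \<in> {1..<m} \<times> {m..<n}" "Q = (\<lambda>(a,b). {a,b}) p" by (rule imageE)
      obtain a b where "p = (a,b)" by (cases p)
      hence ab: "a \<in> {1..<m}" "b \<in> {m..<n}" "Q = {a,b}" using p by auto
      hence "{u,v} = {a,b}" using Q uv by auto
      hence "u \<in> {1..<m} \<or> v \<in> {1..<m}" using ab by (metis doubleton_eq_iff)
      thus ?thesis using ab \<open>{u,v} = {a,b}\<close> unfolding W_def by simp
    qed
    show ?thesis using W1 W2 by blast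
  qed
  show ?thesis unfolding is_clique_partition_def using cl un by (simp add: P0_def)
qed

lemma P0_sum:
  assumes m: "0 < m" "m < n"
  shows "(\<Sum>Q\<in>P0 n m. card Q) = (n - m + 1) + 2 * ((m - 1) * (n - m))"
proof -
  let ?I = "(\<lambda>(a,b). {a,b}) ` ({1..<m} \<times> {m..<n})"
  have nin: "insert 0 {m..<n} \<notin> ?I"
  proof
    assume "insert 0 {m..<n} \<in> ?I"
    then obtain a b where ab: "a \<in> {1..<m}" "b \<in> {m..<n}" "insert 0 {m..<n} = {a,b}" by auto
    hence "0 \<in> {a,b}" by (metis insertI1)
    thus False using ab m by auto
  qed
  have inj: "inj_on (\<lambda>(a,b). {a::nat,b}) ({1..<m} \<times> {m..<n})"
    by (auto simp: inj_on_def doubleton_eq_iff)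
  have "(\<Sum>Q\<in>?I. card Q) = (\<Sum>p\<in>{1..<m} \<times> {m..<n}. card ((\<lambda>(a,b). {a::nat,b}) p))"
    by (rule sum.reindex[OF inj, unfolded comp_def])
  also have "\<dots> = (\<Sum>p\<in>{1..<m} \<times> {m..<n}. 2)"
    by (intro sum.cong) auto
  also have "\<dots> = 2 * ((m - 1) * (n - m))" by simp
  finally have I: "(\<Sum>Q\<in>?I. card Q) = 2 * ((m - 1) * (n - m))" .
  have "card (insert 0 {m..<n}) = n - m + 1" using m by simp
  thus ?thesis unfolding P0_def using I nin by (simp add: sum.insert)
qed


lemma keyn:
  fixes n m :: nat
  assumes n: "0 < n" and m: "0 < m" and sq: "real m \<le> sqrt (real n) / 2"
  shows "(2 * real m - 1) * real n - 2 * (real m)^2 \<le> real (scp_KnKm n m) \<and>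
     (2 \<le> m \<longrightarrow> real (scp_KnKm n m) \<le> (2 * real m - 1) * real n - 1 * (real m)^2)"
proof (intro conjI impI)
  have "(2 * real m)^2 \<le> (sqrt (real n))^2" using sq by (intro power_mono) auto
  hence "4 * (real m)^2 \<le> real n" by (simp add: power_mult_distrib)
  hence nm: "4 * m^2 \<le> n" by (metis of_nat_le_iff of_nat_mult of_nat_numeral of_nat_power)
  have mn: "m < n"
  proof -
    have "m \<le> m * m" by (rule le_square)
    moreover have "0 < m * m" using m by simp
    moreover have "4 * (m * m) \<le> n" using nm by (simp add: power2_eq_square)
    ultimately show ?thesis by linarith
  qed
  define S where "S = {\<Sum>Q\<in>P. card Q | P. is_clique_partition n m P}"
  have sc: "scp_KnKm n m = Min S" unfolding scp_KnKm_def S_def ..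
  have "S \<subseteq> (\<lambda>P. \<Sum>Q\<in>P. card Q) ` Pow (Pow {0..<n})"
    unfolding S_def by (auto simp: is_clique_partition_def is_clique_def)
  hence fS: "finite S" by (rule finite_subset) auto
  have P0S: "(n - m + 1) + 2 * ((m - 1) * (n - m)) \<in> S"
    unfolding S_def using P0_cp[OF m mn] P0_sum[OF m mn] by force
  hence neS: "S \<noteq> {}" by auto
  have "Min S \<in> S" using fS neS by (rule Min_in)
  then obtain P where P: "is_clique_partition n m P" "Min S = (\<Sum>Q\<in>P. card Q)" unfolding S_def by auto
  show "(2 * real m - 1) * real n - 2 * (real m)^2 \<le> real (scp_KnKm n m)"
    using lower[OF P(1) m nm] P(2) sc by simp
  assume m2: "2 \<le> m"
  have "Min S \<le> (n - m + 1) + 2 * ((m - 1) * (n - m))" using fS P0S by (rule Min_le)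
  hence "real (scp_KnKm n m) \<le> real (n - m + 1) + 2 * (real (m - 1) * real (n - m))"
    using sc by (metis of_nat_add of_nat_le_iff of_nat_mult of_nat_numeral)
  also have "\<dots> = (real n - real m + 1) + 2 * ((real m - 1) * (real n - real m))"
    using m mn by (simp add: of_nat_diff)
  also have "\<dots> \<le> (2 * real m - 1) * real n - 1 * (real m)^2"
  proof -
    have "real m * real m \<ge> real m + 1" using m2
    proof -
      have "real m * real m \<ge> 2 * real m" using m2 by (intro mult_right_mono) auto
      thus ?thesis using m2 by linarith
    qed
    thus ?thesis by (simp add: algebra_simps power2_eq_square)
  qed
  finally show "real (scp_KnKm n m) \<le> (2 * real m - 1) * real n - 1 * (real m)^2" .
qed

theorem mainTheorem8:
  "\<exists>(C::real) (c::real) (m0::nat). C > 0 \<and> c > 0 \<and>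
     (\<forall>n m::nat. 0 < n \<longrightarrow> 0 < m \<longrightarrow> real m \<le> sqrt (real n) / 2 \<longrightarrow>
        real (scp_KnKm n m) \<ge> (2 * real m - 1) * real n - C * (real m)^2 \<and>
        (m \<ge> m0 \<longrightarrow> real (scp_KnKm n m) \<le> (2 * real m - 1) * real n - c * (real m)^2))"
  apply (rule exI[of _ 2], rule exI[of _ 1], rule exI[of _ "2::nat"])
  using keyn by simp

end
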